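(* For a topological space $X$, the following statements are equivalent: (1) $X$ is a uniformizable Alexandroff space; (2) $\{V(a):a\in X\}$ is a partition of $X$ into open subsets of $X$; (3) there exists a partition $\mathcal P$ of $X$ such that $\mathcal F_{\mathcal P}:=\{\alpha\subseteq X\times X:\bigcup\{D\times D:D\in\mathcal P\}\subseteq\alpha\}$ is a uniform structure compatible with the topology of $X$; (4) $X$ is an Alexandroff space and for all $a\in X$ and all $b\in V(a)$ we have $V(b)=V(a)$; (5) $X$ is an Alexandroff space and the relation $\{(a,b)\in X\times X: V(b)\subseteq V(a)\}$ is an equivalence relation on $X$; (6) the quotient space $X/\Re$ is discrete, where $\Re:=\{(a,b)\in X\times X:V(b)=V(a)\}$ and $X/\Re$ carries the quotient topology with respect to the natural map $\pi:X\to X/\Re$, $\pi(x)=$ the $\Re$-class of $x$.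
   Context: For a topological space $X$ and $a\in X$, $V(a):=\bigcap\{U: U\text{ open}, a\in U\}$. $X$ is an Alexandroff space if $V(a)$ is open for every $a\in X$. A uniform structure $\mathcal F$ on $X$ is a nonempty family of subsets of $X\times X$ such that for each $\alpha\in\mathcal F$: $\Delta_X\subseteq\alpha$; supersets of $\alpha$ in $X\times X$ belong to $\mathcal F$; $\alpha\cap\beta\in\mathcal F$ for $\beta\in\mathcal F$; $\alpha^{-1}\in\mathcal F$; some $\beta\in\mathcal F$ satisfies $\beta\circ\beta\subseteq\alpha$. It induces the topology $\tau_{\mathcal F}=\{U\subseteq X:\forall x\in U\ \exists \alpha\in\mathcal F\ \alpha[x]\subseteq U\}$ with $\alpha[x]=\{y:(x,y)\in\alpha\}$. $\mathcal F$ is compatible with the topology of $X$ if $\tau_{\mathcal F}$ equals that topology; $X$ is uniformizable if some compatible uniform structure exists. *)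

theory Defs
  imports "HOL-Analysis.Analysis" "HOL-Library.Disjoint_Sets"
begin

definition Vset :: "'a topology \<Rightarrow> 'a \<Rightarrow> 'a set" where
  "Vset T a = \<Inter>{U. openin T U \<and> a \<in> U}"

definition alexandroff :: "'a topology \<Rightarrow> bool" where
  "alexandroff T \<longleftrightarrow> (\<forall>a\<in>topspace T. openin T (Vset T a))"

definition uniform_structure :: "'a set \<Rightarrow> ('a \<times> 'a) set set \<Rightarrow> bool" where
  "uniform_structure X F \<longleftrightarrow>
     F \<noteq> {} \<and> F \<subseteq> Pow (X \<times> X) \<and>
     (\<forall>\<alpha>\<in>F.
        Id_on X \<subseteq> \<alpha> \<and>
        (\<forall>\<beta>. \<alpha> \<subseteq> \<beta> \<and> \<beta> \<subseteq> X \<times> X \<longrightarrow> \<beta> \<in> F) \<and>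
        (\<forall>\<beta>\<in>F. \<alpha> \<inter> \<beta> \<in> F) \<and>
        converse \<alpha> \<in> F \<and>
        (\<exists>\<beta>\<in>F. \<beta> O \<beta> \<subseteq> \<alpha>))"

definition uniform_opens :: "'a set \<Rightarrow> ('a \<times> 'a) set set \<Rightarrow> 'a set set" where
  "uniform_opens X F = {U. U \<subseteq> X \<and> (\<forall>x\<in>U. \<exists>\<alpha>\<in>F. \<alpha> `` {x} \<subseteq> U)}"

definition compatible_uniformity :: "'a topology \<Rightarrow> ('a \<times> 'a) set set \<Rightarrow> bool" where
  "compatible_uniformity T F \<longleftrightarrow> uniform_opens (topspace T) F = {U. openin T U}"

definition uniformizable :: "'a topology \<Rightarrow> bool" where
  "uniformizable T \<longleftrightarrow>
     (\<exists>F. uniform_structure (topspace T) F \<and> compatible_uniformity T F)"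

definition partition_uniformity :: "'a set \<Rightarrow> 'a set set \<Rightarrow> ('a \<times> 'a) set set" where
  "partition_uniformity X P = {\<alpha>. \<alpha> \<subseteq> X \<times> X \<and> (\<Union>D\<in>P. D \<times> D) \<subseteq> \<alpha>}"

definition quotient_topology :: "'a topology \<Rightarrow> ('a \<times> 'a) set \<Rightarrow> 'a set topology" where
  "quotient_topology T R =
     topology (\<lambda>S. S \<subseteq> topspace T // R \<and> openin T {x \<in> topspace T. R `` {x} \<in> S})"

end

theory Submission
  imports Defs
begin

lemma Vset_sub: "a \<in> topspace T \<Longrightarrow> Vset T a \<subseteq> topspace T"
  unfolding Vset_def by auto

lemma Vset_mem: "a \<in> topspace T \<Longrightarrow> a \<in> Vset T a"
  unfolding Vset_def by auto

lemma Vset_least: "openin T U \<Longrightarrow> a \<in> U \<Longrightarrow> Vset T a \<subseteq> U"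
  unfolding Vset_def by auto

lemma Vset_memI: "(\<And>U. openin T U \<Longrightarrow> b \<in> U \<Longrightarrow> a \<in> U) \<Longrightarrow> a \<in> Vset T b"
  unfolding Vset_def by auto

lemma us_id: "uniform_structure X F \<Longrightarrow> \<alpha> \<in> F \<Longrightarrow> x \<in> X \<Longrightarrow> (x,x) \<in> \<alpha>"
proof -
  assume "uniform_structure X F" "\<alpha> \<in> F" "x \<in> X"
  then have "Id_on X \<subseteq> \<alpha>" unfolding uniform_structure_def by auto
  then show ?thesis using \<open>x \<in> X\<close> by auto
qed
lemma us_sub: "uniform_structure X F \<Longrightarrow> \<alpha> \<in> F \<Longrightarrow> \<alpha> \<subseteq> X \<times> X"
  unfolding uniform_structure_def by auto
lemma us_conv: "uniform_structure X F \<Longrightarrow> \<alpha> \<in> F \<Longrightarrow> converse \<alpha> \<in> F"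
  unfolding uniform_structure_def by auto
lemma us_comp: "uniform_structure X F \<Longrightarrow> \<alpha> \<in> F \<Longrightarrow> \<exists>\<beta>\<in>F. \<beta> O \<beta> \<subseteq> \<alpha>"
  unfolding uniform_structure_def by auto

lemma unif_sym:
  assumes U: "uniform_structure (topspace T) F" and C: "compatible_uniformity T F"
    and a: "a \<in> topspace T" and b: "b \<in> Vset T a"
  shows "a \<in> Vset T b"
proof (rule Vset_memI)
  fix U assume oU: "openin T U" and bU: "b \<in> U"
  have "U \<in> uniform_opens (topspace T) F" using C oU unfolding compatible_uniformity_def by auto
  then obtain \<alpha> where aF: "\<alpha> \<in> F" and aU: "\<alpha> `` {b} \<subseteq> U" using bU unfolding uniform_opens_def by auto
  define S where "S = converse \<alpha> `` {a}"
  define U' where "U' = {y \<in> topspace T. \<exists>\<delta>\<in>F. \<delta> `` {y} \<subseteq> S}"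
  have FX: "\<And>\<delta>. \<delta> \<in> F \<Longrightarrow> \<delta> \<subseteq> topspace T \<times> topspace T" using U us_sub by auto
  have "U' \<in> uniform_opens (topspace T) F"
    unfolding uniform_opens_def
  proof (safe)
    fix x assume "x \<in> U'" then show "x \<in> topspace T" unfolding U'_def by auto
  next
    fix y assume "y \<in> U'"
    then obtain \<delta> where dF: "\<delta> \<in> F" and dS: "\<delta> `` {y} \<subseteq> S" unfolding U'_def by auto
    obtain \<delta>' where d'F: "\<delta>' \<in> F" and d'd: "\<delta>' O \<delta>' \<subseteq> \<delta>" using us_comp[OF U dF] by blast
    have "\<delta>' `` {y} \<subseteq> U'"
    proof
      fix z assume z: "z \<in> \<delta>' `` {y}"
      then have "z \<in> topspace T" using FX[OF d'F] by auto
      moreover have "\<delta>' `` {z} \<subseteq> S" using z d'd dS by blast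
      ultimately show "z \<in> U'" unfolding U'_def using d'F by auto
    qed
    then show "\<exists>\<alpha>\<in>F. \<alpha> `` {y} \<subseteq> U'" using d'F by blast
  qed
  then have oU': "openin T U'" using C unfolding compatible_uniformity_def by auto
  have "converse \<alpha> \<in> F" using us_conv[OF U aF] .
  then have "a \<in> U'" unfolding U'_def S_def using a by auto
  then have "b \<in> U'" using Vset_least[OF oU'] b by auto
  then obtain \<delta> where dF: "\<delta> \<in> F" and dS: "\<delta> `` {b} \<subseteq> S" and bX: "b \<in> topspace T" unfolding U'_def by auto
  have "(b,b) \<in> \<delta>" using us_id[OF U dF bX] .
  then have "b \<in> S" using dS by auto
  then have "(b,a) \<in> \<alpha>" unfolding S_def by auto
  then show "a \<in> U" using aU by auto
qed

definition P4 :: "'a topology \<Rightarrow> bool" where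
  "P4 T \<longleftrightarrow> alexandroff T \<and> (\<forall>a\<in>topspace T. \<forall>b\<in>Vset T a. Vset T b = Vset T a)"

lemma one_to_four:
  assumes "alexandroff T" "uniformizable T" shows "P4 T"
proof -
  obtain F where U: "uniform_structure (topspace T) F" and C: "compatible_uniformity T F"
    using assms(2) unfolding uniformizable_def by auto
  have "Vset T b = Vset T a" if a: "a \<in> topspace T" and b: "b \<in> Vset T a" for a b
  proof
    have bX: "b \<in> topspace T" using Vset_sub[OF a] b by auto
    have oa: "openin T (Vset T a)" using assms(1) a unfolding alexandroff_def by auto
    have ob: "openin T (Vset T b)" using assms(1) bX unfolding alexandroff_def by auto
    show "Vset T b \<subseteq> Vset T a" using Vset_least[OF oa b] .
    have "a \<in> Vset T b" using unif_sym[OF U C a b] .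
    then show "Vset T a \<subseteq> Vset T b" using Vset_least[OF ob] by auto
  qed
  then show ?thesis using assms unfolding P4_def by auto
qed

lemma four_to_two:
  assumes "P4 T"
  shows "partition_on (topspace T) (Vset T ` topspace T) \<and> (\<forall>a\<in>topspace T. openin T (Vset T a))"
proof -
  have A: "\<forall>a\<in>topspace T. openin T (Vset T a)" and B: "\<forall>a\<in>topspace T. \<forall>b\<in>Vset T a. Vset T b = Vset T a"
    using assms unfolding P4_def alexandroff_def by auto
  have "\<Union>(Vset T ` topspace T) = topspace T"
  proof
    show "\<Union>(Vset T ` topspace T) \<subseteq> topspace T" using Vset_sub[of _ T] by blast
    show "topspace T \<subseteq> \<Union>(Vset T ` topspace T)"
    proof
      fix x assume "x \<in> topspace T" then show "x \<in> \<Union>(Vset T ` topspace T)" using Vset_mem[of x T] by auto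
    qed
  qed
  moreover have "disjoint (Vset T ` topspace T)"
    unfolding disjoint_def
  proof (intro ballI impI)
    fix A B assume "A \<in> Vset T ` topspace T" "B \<in> Vset T ` topspace T" and ne: "A \<noteq> B"
    then obtain a b where a: "a \<in> topspace T" and b: "b \<in> topspace T" and AB: "A = Vset T a" "B = Vset T b" by auto
    show "A \<inter> B = {}"
    proof (rule ccontr)
    assume "A \<inter> B \<noteq> {}"
    then obtain c where ca: "c \<in> Vset T a" and cb: "c \<in> Vset T b" using AB by auto
    have "Vset T c = Vset T a" using B a ca by auto
    moreover have "Vset T c = Vset T b" using B b cb by auto
    ultimately show False using ne AB by auto
    qed
  qed
  moreover have "{} \<notin> Vset T ` topspace T" using Vset_mem by fastforce
  ultimately show ?thesis using A unfolding partition_on_def by auto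
qed

lemma two_to_three:
  assumes "partition_on (topspace T) (Vset T ` topspace T)" "\<forall>a\<in>topspace T. openin T (Vset T a)"
  shows "\<exists>P. partition_on (topspace T) P \<and> uniform_structure (topspace T) (partition_uniformity (topspace T) P)
              \<and> compatible_uniformity T (partition_uniformity (topspace T) P)"
proof -
  define X where "X = topspace T"
  define P where "P = Vset T ` X"
  define E where "E = (\<Union>D\<in>P. D \<times> D)"
  have dis: "\<And>a b c. a \<in> X \<Longrightarrow> b \<in> X \<Longrightarrow> c \<in> Vset T a \<Longrightarrow> c \<in> Vset T b \<Longrightarrow> Vset T a = Vset T b"
  proof -
    fix a b c assume h: "a \<in> X" "b \<in> X" "c \<in> Vset T a" "c \<in> Vset T b"
    have d: "disjoint (Vset T ` X)" using assms(1) unfolding partition_on_def X_def by auto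
    show "Vset T a = Vset T b"
    proof (rule ccontr)
      assume "Vset T a \<noteq> Vset T b"
      then have "Vset T a \<inter> Vset T b = {}" using d h(1,2) unfolding disjoint_def by auto
      then show False using h by auto
    qed
  qed
  have EX: "E \<subseteq> X \<times> X" unfolding E_def P_def X_def using Vset_sub[of _ T] by blast
  have Eimg: "E `` {x} = Vset T x" if x: "x \<in> X" for x
  proof
    show "E `` {x} \<subseteq> Vset T x"
    proof
      fix y assume "y \<in> E `` {x}"
      then obtain a where a: "a \<in> X" "x \<in> Vset T a" "y \<in> Vset T a" unfolding E_def P_def by auto
      have "Vset T a = Vset T x" using dis[OF a(1) x a(2)] Vset_mem[of _ T] x X_def by auto
      then show "y \<in> Vset T x" using a by auto
    qed
    show "Vset T x \<subseteq> E `` {x}" unfolding E_def P_def using x Vset_mem[of _ T] X_def by blast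
  qed
  have Erefl: "Id_on X \<subseteq> E" using Eimg Vset_mem[of _ T] X_def by (auto simp: Id_on_def)
  have Esym: "converse E = E" unfolding E_def by auto
  have Etrans: "E O E \<subseteq> E"
  proof
    fix p assume "p \<in> E O E"
    then obtain x y z where p: "p = (x,z)" "(x,y) \<in> E" "(y,z) \<in> E" by auto
    have "x \<in> X" "y \<in> X" using p EX by auto
    then show "p \<in> E" using p Eimg[of x] Eimg[of y] dis[of x y y] Vset_mem[of _ T] X_def by auto
  qed
  define F where "F = partition_uniformity X P"
  have Fd: "F = {\<alpha>. \<alpha> \<subseteq> X \<times> X \<and> E \<subseteq> \<alpha>}" unfolding F_def partition_uniformity_def E_def by auto
  have US: "uniform_structure X F"
    unfolding uniform_structure_def Fd
  proof (intro conjI ballI allI impI)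
    show "{\<alpha>. \<alpha> \<subseteq> X \<times> X \<and> E \<subseteq> \<alpha>} \<noteq> {}" using EX by auto
  next
    fix \<alpha> assume a: "\<alpha> \<in> {\<alpha>. \<alpha> \<subseteq> X \<times> X \<and> E \<subseteq> \<alpha>}"
    then show "Id_on X \<subseteq> \<alpha>" using Erefl by auto
    have "converse E \<subseteq> converse \<alpha>" using a by auto
    then have "E \<subseteq> converse \<alpha>" using Esym by simp
    moreover have "converse \<alpha> \<subseteq> X \<times> X" using a by auto
    ultimately show "converse \<alpha> \<in> {\<alpha>. \<alpha> \<subseteq> X \<times> X \<and> E \<subseteq> \<alpha>}" by simp
    have "E O E \<subseteq> \<alpha>" using a Etrans by blast
    then show "\<exists>\<beta>\<in>{\<alpha>. \<alpha> \<subseteq> X \<times> X \<and> E \<subseteq> \<alpha>}. \<beta> O \<beta> \<subseteq> \<alpha>" using EX by blast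
    fix \<beta>
    show "\<alpha> \<subseteq> \<beta> \<and> \<beta> \<subseteq> X \<times> X \<Longrightarrow> \<beta> \<in> {\<alpha>. \<alpha> \<subseteq> X \<times> X \<and> E \<subseteq> \<alpha>}" using a by auto
    show "\<beta> \<in> {\<alpha>. \<alpha> \<subseteq> X \<times> X \<and> E \<subseteq> \<alpha>} \<Longrightarrow> \<alpha> \<inter> \<beta> \<in> {\<alpha>. \<alpha> \<subseteq> X \<times> X \<and> E \<subseteq> \<alpha>}" using a by auto
  qed (auto)
  have CU: "compatible_uniformity T F"
    unfolding compatible_uniformity_def uniform_opens_def X_def[symmetric]
  proof (intro set_eqI iffI; simp)
    fix U assume H: "U \<subseteq> X \<and> (\<forall>x\<in>U. \<exists>\<alpha>\<in>F. \<alpha> `` {x} \<subseteq> U)"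
    have "\<forall>x\<in>U. Vset T x \<subseteq> U"
    proof
      fix x assume x: "x \<in> U"
      then obtain \<alpha> where "\<alpha> \<in> F" "\<alpha> `` {x} \<subseteq> U" using H by auto
      then have "E `` {x} \<subseteq> U" unfolding Fd by auto
      then show "Vset T x \<subseteq> U" using Eimg x H by auto
    qed
    then have "U = \<Union>(Vset T ` U)" using Vset_mem[of _ T] H X_def by blast
    moreover have "openin T (\<Union>(Vset T ` U))" using assms(2) H X_def by auto
    ultimately show "openin T U" by simp
  next
    fix U assume oU: "openin T U"
    have "U \<subseteq> X" using openin_subset oU X_def by auto
    moreover have "\<forall>x\<in>U. \<exists>\<alpha>\<in>F. \<alpha> `` {x} \<subseteq> U"
    proof
      fix x assume x: "x \<in> U"
      have "E `` {x} \<subseteq> U" using Eimg[of x] x \<open>U \<subseteq> X\<close> Vset_least[OF oU x] by auto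
      moreover have "E \<in> F" unfolding Fd using EX by auto
      ultimately show "\<exists>\<alpha>\<in>F. \<alpha> `` {x} \<subseteq> U" by blast
    qed
    ultimately show "U \<subseteq> X \<and> (\<forall>x\<in>U. \<exists>\<alpha>\<in>F. \<alpha> `` {x} \<subseteq> U)" by auto
  qed
  show ?thesis using assms(1) US CU unfolding F_def P_def X_def by auto
qed


lemma three_to_one:
  assumes P: "partition_on (topspace T) P"
    and U: "uniform_structure (topspace T) (partition_uniformity (topspace T) P)"
    and C: "compatible_uniformity T (partition_uniformity (topspace T) P)"
  shows "alexandroff T \<and> uniformizable T"
proof -
  define X where "X = topspace T"
  define F where "F = partition_uniformity X P"
  define E where "E = (\<Union>D\<in>P. D \<times> D)"
  have UP: "\<Union>P = X" and dj: "disjoint P" using P unfolding partition_on_def X_def by auto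
  have EX: "E \<subseteq> X \<times> X" unfolding E_def using UP by blast
  have EF: "E \<in> F" unfolding F_def partition_uniformity_def E_def using EX E_def by auto
  have Fsup: "\<And>\<alpha>. \<alpha> \<in> F \<Longrightarrow> E \<subseteq> \<alpha>" unfolding F_def partition_uniformity_def E_def by auto
  have Eimg: "E `` {x} = D" if D: "D \<in> P" and x: "x \<in> D" for x D
  proof
    show "D \<subseteq> E `` {x}" unfolding E_def using D x by blast
    show "E `` {x} \<subseteq> D"
    proof
      fix y assume "y \<in> E `` {x}"
      then obtain D' where D': "D' \<in> P" "x \<in> D'" "y \<in> D'" unfolding E_def by auto
      have "D' = D"
      proof (rule ccontr)
        assume "D' \<noteq> D"
        then have "D' \<inter> D = {}" using dj D'(1) D unfolding disjoint_def by auto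
        then show False using D'(2) x by auto
      qed
      then show "y \<in> D" using D' by auto
    qed
  qed
  have "openin T (Vset T a)" if a: "a \<in> X" for a
  proof -
    obtain D where D: "D \<in> P" "a \<in> D" using a UP by auto
    have DX: "D \<subseteq> X" using D UP by auto
    have "D \<in> uniform_opens X F" unfolding uniform_opens_def
      using DX Eimg[OF D(1)] EF by auto
    then have oD: "openin T D" using C unfolding compatible_uniformity_def F_def X_def by auto
    have "D \<subseteq> Vset T a"
    proof
      fix y assume y: "y \<in> D"
      show "y \<in> Vset T a"
      proof (rule Vset_memI)
        fix U assume oU: "openin T U" and aU: "a \<in> U"
        have "U \<in> uniform_opens X F" using C oU unfolding compatible_uniformity_def F_def X_def by auto
        then obtain \<alpha> where "\<alpha> \<in> F" "\<alpha> `` {a} \<subseteq> U" using aU unfolding uniform_opens_def by auto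
        then have "E `` {a} \<subseteq> U" using Fsup by blast
        then show "y \<in> U" using Eimg[OF D] y by auto
      qed
    qed
    moreover have "Vset T a \<subseteq> D" using Vset_least[OF oD D(2)] .
    ultimately show ?thesis using oD by auto
  qed
  then have "alexandroff T" unfolding alexandroff_def X_def by auto
  moreover have "uniformizable T" unfolding uniformizable_def using U C by blast
  ultimately show ?thesis by auto
qed

lemma eq45:
  "P4 T \<longleftrightarrow> (alexandroff T \<and> equiv (topspace T) {(a, b). a \<in> topspace T \<and> b \<in> topspace T \<and> Vset T b \<subseteq> Vset T a})"
  (is "_ \<longleftrightarrow> _ \<and> equiv ?X ?R")
proof
  assume H: "P4 T"
  then have al: "alexandroff T" and B: "\<forall>a\<in>?X. \<forall>b\<in>Vset T a. Vset T b = Vset T a" unfolding P4_def by auto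
  have "refl_on ?X ?R" unfolding refl_on_def by auto
  moreover have "sym ?R"
  proof (rule symI)
    fix a b assume "(a,b) \<in> ?R"
    then have a: "a \<in> ?X" and b: "b \<in> ?X" and s: "Vset T b \<subseteq> Vset T a" by auto
    have "b \<in> Vset T a" using s Vset_mem[OF b] by auto
    then have "Vset T b = Vset T a" using B a by auto
    then show "(b,a) \<in> ?R" using a b by auto
  qed
  moreover have "trans ?R" by (rule transI) auto
  ultimately show "alexandroff T \<and> equiv ?X ?R" using al unfolding equiv_def by auto
next
  assume H: "alexandroff T \<and> equiv ?X ?R"
  then have al: "alexandroff T" and sy: "sym ?R" unfolding equiv_def by auto
  have "Vset T b = Vset T a" if a: "a \<in> ?X" and b: "b \<in> Vset T a" for a b
  proof -
    have bX: "b \<in> ?X" using Vset_sub[OF a] b by auto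
    have oa: "openin T (Vset T a)" using al a unfolding alexandroff_def by auto
    have s: "Vset T b \<subseteq> Vset T a" using Vset_least[OF oa b] .
    then have "(a,b) \<in> ?R" using a bX by auto
    then have "(b,a) \<in> ?R" using sy unfolding sym_def by blast
    then show ?thesis using s by auto
  qed
  then show "P4 T" unfolding P4_def using al by auto
qed

lemma eq46:
  "P4 T \<longleftrightarrow> quotient_topology T {(a, b). a \<in> topspace T \<and> b \<in> topspace T \<and> Vset T b = Vset T a}
          = discrete_topology (topspace T // {(a, b). a \<in> topspace T \<and> b \<in> topspace T \<and> Vset T b = Vset T a})"
proof -
  define X where "X = topspace T"
  define R where "R = {(a, b). a \<in> X \<and> b \<in> X \<and> Vset T b = Vset T a}"
  define Q where "Q = (\<lambda>S. S \<subseteq> X // R \<and> openin T {x \<in> X. R `` {x} \<in> S})"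
  have Rimg: "R `` {x} = {b \<in> X. Vset T b = Vset T x}" if "x \<in> X" for x
    unfolding R_def using that by auto
  have istop: "istopology Q"
    unfolding istopology_def
  proof (intro conjI allI impI ballI)
    fix S S' assume "Q S" "Q S'"
    moreover have "{x \<in> X. R `` {x} \<in> S \<inter> S'} = {x \<in> X. R `` {x} \<in> S} \<inter> {x \<in> X. R `` {x} \<in> S'}" by auto
    ultimately show "Q (S \<inter> S')" unfolding Q_def by (auto intro: openin_Int)
  next
    fix K assume K: "\<forall>S\<in>K. Q S"
    have eq: "{x \<in> X. R `` {x} \<in> \<Union>K} = \<Union>((\<lambda>S. {x \<in> X. R `` {x} \<in> S}) ` K)" by auto
    have "openin T (\<Union>((\<lambda>S. {x \<in> X. R `` {x} \<in> S}) ` K))"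
      using K unfolding Q_def by (intro openin_Union) auto
    then show "Q (\<Union>K)" using K unfolding Q_def eq by auto
  qed
  have oq: "openin (topology Q) = Q" by (rule topology_inverse'[OF istop])
  have qt: "quotient_topology T R = topology Q" unfolding quotient_topology_def Q_def X_def by simp
  have "quotient_topology T R = discrete_topology (X // R) \<longleftrightarrow> (\<forall>S. S \<subseteq> X // R \<longrightarrow> openin T {x \<in> X. R `` {x} \<in> S})"
    unfolding qt topology_eq oq openin_discrete_topology by (auto simp: Q_def)
  also have "\<dots> \<longleftrightarrow> P4 T"
  proof
    assume H: "\<forall>S. S \<subseteq> X // R \<longrightarrow> openin T {x \<in> X. R `` {x} \<in> S}"
    have main: "openin T (Vset T a) \<and> (\<forall>b\<in>Vset T a. Vset T b = Vset T a)" if a: "a \<in> X" for a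
    proof -
      have "{R `` {a}} \<subseteq> X // R" using a by (auto intro: quotientI)
      then have o: "openin T {x \<in> X. R `` {x} \<in> {R `` {a}}}" using H by blast
      have eqO: "{x \<in> X. R `` {x} \<in> {R `` {a}}} = Vset T a"
      proof
        show "{x \<in> X. R `` {x} \<in> {R `` {a}}} \<subseteq> Vset T a"
        proof
          fix x assume "x \<in> {x \<in> X. R `` {x} \<in> {R `` {a}}}"
          then have x: "x \<in> X" and e: "R `` {x} = R `` {a}" by auto
          have "x \<in> R `` {x}" using x Rimg by auto
          then have "Vset T x = Vset T a" using e Rimg[OF a] by auto
          then show "x \<in> Vset T a" using Vset_mem[of x T] x X_def by auto
        qed
        have "a \<in> {x \<in> X. R `` {x} \<in> {R `` {a}}}" using a by auto
        then show "Vset T a \<subseteq> {x \<in> X. R `` {x} \<in> {R `` {a}}}" using Vset_least[OF o] by blast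
      qed
      have "\<forall>b\<in>Vset T a. Vset T b = Vset T a"
      proof
        fix b assume "b \<in> Vset T a"
        then have b: "b \<in> X" and e: "R `` {b} = R `` {a}" using eqO by auto
        have "b \<in> R `` {b}" using b Rimg by auto
        then show "Vset T b = Vset T a" using e Rimg[OF a] by auto
      qed
      then show ?thesis using o eqO by auto
    qed
    then show "P4 T" unfolding P4_def alexandroff_def X_def by auto
  next
    assume H: "P4 T"
    have al: "\<forall>a\<in>X. openin T (Vset T a)" and B: "\<forall>a\<in>X. \<forall>b\<in>Vset T a. Vset T b = Vset T a"
      using H unfolding P4_def alexandroff_def X_def by auto
    have RV: "R `` {x} = Vset T x" if x: "x \<in> X" for x
    proof
      show "R `` {x} \<subseteq> Vset T x" unfolding Rimg[OF x] using Vset_mem[of _ T] X_def by auto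
      show "Vset T x \<subseteq> R `` {x}" unfolding Rimg[OF x] using B x Vset_sub[of x T] X_def by auto
    qed
    show "\<forall>S. S \<subseteq> X // R \<longrightarrow> openin T {x \<in> X. R `` {x} \<in> S}"
    proof (intro allI impI)
      fix S assume S: "S \<subseteq> X // R"
      have eq: "{x \<in> X. R `` {x} \<in> S} = \<Union>S"
      proof
        show "{x \<in> X. R `` {x} \<in> S} \<subseteq> \<Union>S"
        proof
          fix x assume "x \<in> {x \<in> X. R `` {x} \<in> S}"
          then have x: "x \<in> X" "R `` {x} \<in> S" by auto
          have "x \<in> R `` {x}" using x Rimg by auto
          then show "x \<in> \<Union>S" using x by auto
        qed
        show "\<Union>S \<subseteq> {x \<in> X. R `` {x} \<in> S}"
        proof
          fix y assume "y \<in> \<Union>S"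
          then obtain C where C: "C \<in> S" "y \<in> C" by auto
          then obtain a where a: "a \<in> X" "C = R `` {a}" using S by (auto elim: quotientE)
          have y: "y \<in> X" "Vset T y = Vset T a" using C a Rimg by auto
          have "R `` {y} = R `` {a}" using Rimg[OF a(1)] Rimg[OF y(1)] y(2) by simp
          then show "y \<in> {x \<in> X. R `` {x} \<in> S}" using y C a by auto
        qed
      qed
      have "\<forall>C\<in>S. openin T C"
      proof
        fix C assume "C \<in> S"
        then obtain a where a: "a \<in> X" "C = R `` {a}" using S by (auto elim: quotientE)
        then show "openin T C" using RV al by auto
      qed
      then show "openin T {x \<in> X. R `` {x} \<in> S}" unfolding eq by (auto intro: openin_Union)
    qed
  qed
  finally show ?thesis unfolding R_def X_def by simp
qed

theorem mainTheorem4: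
  fixes T :: "'a topology"
  defines "X \<equiv> topspace T"
  shows
   "((alexandroff T \<and> uniformizable T)
      \<longleftrightarrow> (partition_on X (Vset T ` X) \<and> (\<forall>a\<in>X. openin T (Vset T a))))
    \<and> ((alexandroff T \<and> uniformizable T)
      \<longleftrightarrow> (\<exists>P. partition_on X P \<and> uniform_structure X (partition_uniformity X P)
              \<and> compatible_uniformity T (partition_uniformity X P)))
    \<and> ((alexandroff T \<and> uniformizable T)
      \<longleftrightarrow> (alexandroff T \<and> (\<forall>a\<in>X. \<forall>b\<in>Vset T a. Vset T b = Vset T a)))
    \<and> ((alexandroff T \<and> uniformizable T)
      \<longleftrightarrow> (alexandroff T \<and> equiv X {(a, b). a \<in> X \<and> b \<in> X \<and> Vset T b \<subseteq> Vset T a}))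
    \<and> ((alexandroff T \<and> uniformizable T)
      \<longleftrightarrow> quotient_topology T {(a, b). a \<in> X \<and> b \<in> X \<and> Vset T b = Vset T a}
          = discrete_topology (X // {(a, b). a \<in> X \<and> b \<in> X \<and> Vset T b = Vset T a}))"
proof -
  have c2: "(partition_on X (Vset T ` X) \<and> (\<forall>a\<in>X. openin T (Vset T a))) \<longleftrightarrow> P4 T"
  proof
    assume "partition_on X (Vset T ` X) \<and> (\<forall>a\<in>X. openin T (Vset T a))"
    then have "alexandroff T \<and> uniformizable T" using two_to_three three_to_one unfolding X_def by metis
    then show "P4 T" using one_to_four by auto
  qed (use four_to_two X_def in auto)
  have c3: "(\<exists>P. partition_on X P \<and> uniform_structure X (partition_uniformity X P)
              \<and> compatible_uniformity T (partition_uniformity X P)) \<longleftrightarrow> P4 T"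
  proof
    assume "\<exists>P. partition_on X P \<and> uniform_structure X (partition_uniformity X P)
              \<and> compatible_uniformity T (partition_uniformity X P)"
    then have "alexandroff T \<and> uniformizable T" using three_to_one unfolding X_def by metis
    then show "P4 T" using one_to_four by auto
  next
    assume "P4 T"
    then show "\<exists>P. partition_on X P \<and> uniform_structure X (partition_uniformity X P)
              \<and> compatible_uniformity T (partition_uniformity X P)"
      using four_to_two two_to_three unfolding X_def by metis
  qed
  have c1: "(alexandroff T \<and> uniformizable T) \<longleftrightarrow> P4 T"
    using c3 one_to_four three_to_one unfolding X_def by metis
  show ?thesis using c1 c2 c3 eq45[of T] eq46[of T] unfolding X_def P4_def by auto
qed

end
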